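(* Let $n\ge3$, $-2<l<0$, $1<p<\frac{n+2}{n-2}$, and let $f$ satisfy $(f_1)$, $(f_2)$, $(f_2')$. For $k>1$ and $\alpha>0$ let $r_{\alpha,k}=\inf\{r>0:u(r;\alpha)=\alpha/k\}$. Then $\lim_{\alpha\to0}r_{\alpha,k}=\infty$.
   Context: Standing hypotheses: $(f_1)$ $f\in C(0,\infty)$, $f(r)>0$ for $r>0$; $(f_2)$ $f(r)$ comparable to $r^l$ for large $r$, $-2<l<0$; $(f_2')$ $f(r)=O(r^\sigma)$ as $r\to0$, $\sigma>-2$. For $\alpha>0$, $u(r;\alpha)$ is the unique solution of (1.4) $u''+\frac{n-1}{r}u'+f(r)(u^+)^p=0$, $u(0;\alpha)=\alpha$, $u'(0;\alpha)=0$, $u^+=\max\{u,0\}$. *)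

theory Defs
  imports "HOL-Analysis.Analysis"
begin

definition is_radial_sol :: "nat \<Rightarrow> (real \<Rightarrow> real) \<Rightarrow> real \<Rightarrow> real \<Rightarrow> (real \<Rightarrow> real) \<Rightarrow> bool" where
  "is_radial_sol n f p \<alpha> u \<longleftrightarrow>
     u 0 = \<alpha> \<and>
     (\<exists>u'. u' 0 = 0 \<and> continuous_on {0..} u' \<and>
        (\<forall>r\<ge>0. (u has_real_derivative u' r) (at r within {0..})) \<and>
        (\<forall>r>0. \<exists>u''. (u' has_real_derivative u'') (at r) \<and>
                u'' + (real n - 1) / r * u' r + f r * (max (u r) 0) powr p = 0))"

end

theory Submission imports Defs begin
lemma unpack:
  assumes sol: "is_radial_sol n f p \<alpha> u" and n: "n \<ge> 3" and fpos: "\<forall>r>0. f r > 0" and a: "\<alpha> > 0"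
  obtains u' where "u 0 = \<alpha>" "u' 0 = 0" "continuous_on {0..} u'" "continuous_on {0..} u"
     "\<forall>r>0. (u has_real_derivative u' r) (at r)"
     "\<forall>r>0. ((\<lambda>s. s powr (real n - 1) * u' s) has_real_derivative
              (- (r powr (real n - 1) * f r * max (u r) 0 powr p))) (at r)"
     "\<forall>r\<ge>0. u' r \<le> 0" "\<forall>r\<ge>0. u r \<le> \<alpha>"
proof -
  from sol obtain u' where u0: "u 0 = \<alpha>" and u'0: "u' 0 = 0" and cu': "continuous_on {0..} u'"
    and du: "\<forall>r\<ge>0. (u has_real_derivative u' r) (at r within {0..})"
    and ode: "\<forall>r>0. \<exists>u''. (u' has_real_derivative u'') (at r) \<and>
                u'' + (real n - 1) / r * u' r + f r * (max (u r) 0) powr p = 0"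
    unfolding is_radial_sol_def by blast
  have cu: "continuous_on {0..} u"
    using du by (intro DERIV_continuous_on) auto
  have du': "\<forall>r>0. (u has_real_derivative u' r) (at r)"
  proof (intro allI impI)
    fix r :: real assume r: "r > 0"
    have "at r within {0..} = at r"
      by (rule at_within_interior) (use r in auto)
    with du r show "(u has_real_derivative u' r) (at r)" by (metis less_imp_le)
  qed
  have dw: "\<forall>r>0. ((\<lambda>s. s powr (real n - 1) * u' s) has_real_derivative
              (- (r powr (real n - 1) * f r * max (u r) 0 powr p))) (at r)"
  proof (intro allI impI)
    fix r :: real assume r: "r > 0"
    from ode r obtain u2 where d2: "(u' has_real_derivative u2) (at r)"
      and e: "u2 + (real n - 1) / r * u' r + f r * (max (u r) 0) powr p = 0" by blast
    have d1: "((\<lambda>s. s powr (real n - 1)) has_real_derivative (real n - 1) * r powr (real n - 1 - 1)) (at r)"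
      by (rule has_real_derivative_powr) (use r in auto)
    have "((\<lambda>s. s powr (real n - 1) * u' s) has_real_derivative
           (real n - 1) * r powr (real n - 2) * u' r + r powr (real n - 1) * u2) (at r)"
      using DERIV_mult[OF d1 d2] by (simp add: mult.commute)
    moreover have "r powr (real n - 2) = r powr (real n - 1) / r"
      using r powr_diff[of r "real n - 1" 1] by simp
    moreover have "u2 = - ((real n - 1) / r * u' r + f r * (max (u r) 0) powr p)" using e by linarith
    ultimately show "((\<lambda>s. s powr (real n - 1) * u' s) has_real_derivative
              (- (r powr (real n - 1) * f r * max (u r) 0 powr p))) (at r)"
      by (simp add: algebra_simps)
  qed
  have cw: "continuous_on {0..} (\<lambda>s. s powr (real n - 1) * u' s)"
    using n by (intro continuous_intros continuous_on_powr' cu') auto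
  have u'np: "\<forall>r\<ge>0. u' r \<le> 0"
  proof (intro allI impI)
    fix r :: real assume r: "r \<ge> 0"
    show "u' r \<le> 0"
    proof (cases "r = 0")
      case True then show ?thesis using u'0 by simp
    next
      case False
      have "(\<lambda>s. s powr (real n - 1) * u' s) 0 \<ge> (\<lambda>s. s powr (real n - 1) * u' s) r"
      proof (rule DERIV_nonpos_imp_decreasing_open[OF r])
        fix x :: real assume x: "0 < x" "x < r"
        show "\<exists>y. ((\<lambda>s. s powr (real n - 1) * u' s) has_real_derivative y) (at x) \<and> y \<le> 0"
        proof (intro exI conjI)
          show "((\<lambda>s. s powr (real n - 1) * u' s) has_real_derivative
              (- (x powr (real n - 1) * f x * max (u x) 0 powr p))) (at x)" using dw x by auto
          have "f x > 0" using fpos x by auto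
          then show "- (x powr (real n - 1) * f x * max (u x) 0 powr p) \<le> 0"
            by (simp add: mult_nonneg_nonneg)
        qed
      next
        show "continuous_on {0..r} (\<lambda>s. s powr (real n - 1) * u' s)"
          using cw by (rule continuous_on_subset) auto
      qed
      then have "r powr (real n - 1) * u' r \<le> 0" using u'0 by simp
      moreover have "r powr (real n - 1) > 0" using False r by simp
      ultimately show ?thesis by (simp add: mult_le_0_iff)
    qed
  qed
  have ule: "\<forall>r\<ge>0. u r \<le> \<alpha>"
  proof (intro allI impI)
    fix r :: real assume r: "r \<ge> 0"
    have "u 0 \<ge> u r"
    proof (rule DERIV_nonpos_imp_decreasing_open[OF r])
      fix x :: real assume x: "0 < x" "x < r"
      show "\<exists>y. (u has_real_derivative y) (at x) \<and> y \<le> 0"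
        using du' u'np x by auto
    next
      show "continuous_on {0..r} u" using cu by (rule continuous_on_subset) auto
    qed
    then show "u r \<le> \<alpha>" using u0 by simp
  qed
  show ?thesis using that u0 u'0 cu' cu du' dw u'np ule by blast
qed

lemma aux: "c \<noteq> 0 \<Longrightarrow> K*(c*Y)/(a*c) = K*Y/(a::real)" by simp

lemma lower:
  fixes u u' f :: "real \<Rightarrow> real" and n :: nat
  assumes n: "n \<ge> 3" and R: "R > 0" and D: "D \<ge> 0" and tau: "-2 < \<tau>" "\<tau> \<le> 0"
    and fb: "\<forall>s. 0 < s \<and> s \<le> R \<longrightarrow> f s \<le> D * s powr \<tau>"
    and fpos: "\<forall>r>0. f r > 0" and p: "p > 0" and a: "\<alpha> > 0"
    and u0: "u 0 = \<alpha>" and u'0: "u' 0 = 0" and cu': "continuous_on {0..} u'" and cu: "continuous_on {0..} u"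
    and du: "\<forall>r>0. (u has_real_derivative u' r) (at r)"
    and dw: "\<forall>r>0. ((\<lambda>s. s powr (real n - 1) * u' s) has_real_derivative
              (- (r powr (real n - 1) * f r * max (u r) 0 powr p))) (at r)"
    and ule: "\<forall>r\<ge>0. u r \<le> \<alpha>"
  shows "\<forall>r. 0 \<le> r \<and> r \<le> R \<longrightarrow> u r \<ge> \<alpha> - D * \<alpha> powr p * R powr (2+\<tau>) / ((real n+\<tau>)*(2+\<tau>))"
proof -
  define K where "K = D * \<alpha> powr p"
  have K: "K \<ge> 0" unfolding K_def using D by simp
  have nt: "real n + \<tau> > 0" using n tau by linarith
  have s1: "u' x \<ge> - K * x powr (1+\<tau>) / (real n + \<tau>)" if x: "0 < x" "x \<le> R" for x
  proof -
    define h where "h s = s powr (real n - 1) * u' s + K * s powr (real n + \<tau>) / (real n + \<tau>)" for s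
    have "h 0 \<le> h x"
    proof (rule DERIV_nonneg_imp_increasing_open[of 0 x h])
      show "0 \<le> x" using x by simp
      show "continuous_on {0..x} h"
        unfolding h_def using n nt
        by (intro continuous_intros continuous_on_powr' continuous_on_subset[OF cu']) auto
    next
      fix y :: real assume y: "0 < y" "y < x"
      have d1: "((\<lambda>s. s powr (real n + \<tau>)) has_real_derivative (real n + \<tau>) * y powr (real n + \<tau> - 1)) (at y)"
        by (rule has_real_derivative_powr) (use y in auto)
      have "(h has_real_derivative (- (y powr (real n - 1) * f y * max (u y) 0 powr p)) +
               K * ((real n + \<tau>) * y powr (real n + \<tau> - 1)) / (real n + \<tau>)) (at y)"
        unfolding h_def using dw y
        by (intro DERIV_add DERIV_cdivide DERIV_cmult d1) auto
      moreover have "y powr (real n - 1) * f y * max (u y) 0 powr p \<le> K * y powr (real n + \<tau> - 1)"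
      proof -
        have fy: "f y \<le> D * y powr \<tau>" using fb y x by auto
        have m: "max (u y) 0 powr p \<le> \<alpha> powr p"
          using ule y a p by (intro powr_mono2) auto
        have "y powr (real n - 1) * f y * max (u y) 0 powr p \<le> y powr (real n - 1) * (D * y powr \<tau>) * \<alpha> powr p"
          using fy m fpos y D by (intro mult_mono) auto
        also have "\<dots> = K * (y powr (real n - 1) * y powr \<tau>)" unfolding K_def by simp
        also have "y powr (real n - 1) * y powr \<tau> = y powr (real n + \<tau> - 1)"
          by (simp add: powr_add[symmetric] algebra_simps)
        finally show ?thesis .
      qed
      ultimately show "\<exists>d. (h has_real_derivative d) (at y) \<and> d \<ge> 0"
        using nt by (intro exI conjI) auto
    qed
    moreover have "h 0 = 0" unfolding h_def using u'0 by simp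
    ultimately have "x powr (real n - 1) * u' x \<ge> - (K * x powr (real n + \<tau>) / (real n + \<tau>))"
      unfolding h_def by linarith
    moreover have "x powr (real n + \<tau>) = x powr (real n - 1) * x powr (1 + \<tau>)"
      by (simp add: powr_add[symmetric])
    moreover have "x powr (real n - 1) > 0" using x by simp
    ultimately have "x powr (real n - 1) * u' x \<ge> x powr (real n - 1) * (- K * x powr (1+\<tau>) / (real n + \<tau>))"
      by (simp add: algebra_simps)
    then show ?thesis using \<open>x powr (real n - 1) > 0\<close> by (rule mult_left_le_imp_le)
  qed
  show ?thesis
  proof (intro allI impI)
    fix r :: real assume r: "0 \<le> r \<and> r \<le> R"
    define g where "g s = u s + K * s powr (2 + \<tau>) / ((real n + \<tau>) * (2 + \<tau>))" for s
    have "g 0 \<le> g r"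
    proof (rule DERIV_nonneg_imp_increasing_open[of 0 r g])
      show "0 \<le> r" using r by simp
      show "continuous_on {0..r} g"
      proof -
        have hc: "continuous_on {0..r} (\<lambda>s. s powr (2 + \<tau>))"
          using tau by (intro continuous_on_powr') (auto intro: continuous_intros)
        show ?thesis
          unfolding g_def using tau nt
          by (intro continuous_on_add continuous_on_divide continuous_on_mult_left continuous_on_subset[OF cu] continuous_on_const hc) auto
      qed
    next
      fix y :: real assume y: "0 < y" "y < r"
      have d1: "((\<lambda>s. s powr (2 + \<tau>)) has_real_derivative (2 + \<tau>) * y powr (2 + \<tau> - 1)) (at y)"
        by (rule has_real_derivative_powr) (use y in auto)
      have "(g has_real_derivative u' y + K * ((2 + \<tau>) * y powr (2 + \<tau> - 1)) / ((real n + \<tau>) * (2 + \<tau>))) (at y)"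
        unfolding g_def using du y
        by (intro DERIV_add DERIV_cdivide DERIV_cmult d1) auto
      moreover have "K * ((2 + \<tau>) * y powr (2 + \<tau> - 1)) / ((real n + \<tau>) * (2 + \<tau>)) = K * y powr (1+\<tau>) / (real n + \<tau>)"
      proof -
        have e: "2 + \<tau> - 1 = 1 + \<tau>" by simp
        have "2 + \<tau> \<noteq> 0" "real n + \<tau> \<noteq> 0" using tau nt by auto
        then show ?thesis unfolding e by (intro aux)
      qed
      moreover have "u' y \<ge> - K * y powr (1+\<tau>) / (real n + \<tau>)" using s1 y r by auto
      ultimately have "(g has_real_derivative u' y + K * y powr (1+\<tau>) / (real n + \<tau>)) (at y)"
        "u' y + K * y powr (1+\<tau>) / (real n + \<tau>) \<ge> 0" by auto
      then show "\<exists>d. (g has_real_derivative d) (at y) \<and> d \<ge> 0" by blast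
    qed
    then have "u r \<ge> \<alpha> - K * r powr (2 + \<tau>) / ((real n + \<tau>) * (2 + \<tau>))"
      unfolding g_def using u0 tau by simp
    moreover have "K * r powr (2 + \<tau>) / ((real n + \<tau>) * (2 + \<tau>)) \<le> K * R powr (2 + \<tau>) / ((real n + \<tau>) * (2 + \<tau>))"
      using K r tau nt by (intro divide_right_mono mult_left_mono powr_mono2) auto
    ultimately show "u r \<ge> \<alpha> - D * \<alpha> powr p * R powr (2+\<tau>) / ((real n+\<tau>)*(2+\<tau>))"
      unfolding K_def by linarith
  qed
qed

lemma aux2: "E*(2+l) = B/X \<Longrightarrow> -B*(R*(Q/X)) = R*(-E*(2+l)*(Q::real))"
proof -
  assume h: "E*(2+l) = B/X"
  have "R*(-E*(2+l)*Q) = - (R*Q*(E*(2+l)))" by (simp add: algebra_simps)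
  also have "\<dots> = -B*(R*(Q/X))" unfolding h by simp
  finally show ?thesis by simp
qed

lemma hits:
  fixes u u' f :: "real \<Rightarrow> real" and n :: nat
  assumes n: "n \<ge> 3" and c1: "c1 > 0" and R0: "R0 > 0" and l: "-2 < l" "l < 0"
    and fl: "\<forall>r\<ge>R0. c1 * r powr l \<le> f r"
    and fpos: "\<forall>r>0. f r > 0" and p: "p > 0" and a: "\<alpha> > 0" and k: "k > 1"
    and u0: "u 0 = \<alpha>" and cu': "continuous_on {0..} u'" and cu: "continuous_on {0..} u"
    and du: "\<forall>r>0. (u has_real_derivative u' r) (at r)"
    and dw: "\<forall>r>0. ((\<lambda>s. s powr (real n - 1) * u' s) has_real_derivative
              (- (r powr (real n - 1) * f r * max (u r) 0 powr p))) (at r)"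
    and u'np: "\<forall>r\<ge>0. u' r \<le> 0" and ule: "\<forall>r\<ge>0. u r \<le> \<alpha>"
  shows "\<exists>r>0. u r = \<alpha> / k"
proof (rule ccontr)
  assume H: "\<not> (\<exists>r>0. u r = \<alpha> / k)"
  define c where "c = \<alpha> / k"
  have c: "c > 0" "c < \<alpha>" unfolding c_def using a k by (auto simp: field_simps)
  have all: "u r > c" if r: "r \<ge> 0" for r
  proof (rule ccontr)
    assume "\<not> u r > c"
    then have "u r \<le> c" by simp
    moreover have "c \<le> u 0" using u0 c by simp
    moreover have "continuous_on {0..r} u" using cu by (rule continuous_on_subset) auto
    ultimately obtain x where x: "0 \<le> x" "x \<le> r" "u x = c"
      using IVT2'[of u r c 0] r by auto
    then have "x \<noteq> 0" using u0 c by auto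
    with x H show False unfolding c_def by auto
  qed
  define B where "B = c1 * c powr p"
  have B: "B > 0" unfolding B_def using c1 c by simp
  define w where "w s = s powr (real n - 1) * u' s" for s
  have cw: "continuous_on {0..} w"
  proof -
    have "continuous_on {0..} (\<lambda>s::real. s powr (real n - 1))"
      using n by (intro continuous_on_powr') (auto intro: continuous_intros)
    then show ?thesis unfolding w_def by (intro continuous_on_mult cu')
  qed
  have nl: "real n - 1 + l > 0" using n l by linarith
  have stepA: "w r \<le> - B * (r/2) powr (real n + l)" if r: "r \<ge> 2 * R0" for r
  proof -
    define b where "b = r / 2"
    have b: "b \<ge> R0" "b > 0" "b \<le> r" using r R0 unfolding b_def by auto
    define q where "q s = w s + B * b powr (real n - 1 + l) * s" for s
    have "q b \<ge> q r"
    proof (rule DERIV_nonpos_imp_decreasing_open[of b r q])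
      show "b \<le> r" using b by simp
      show "continuous_on {b..r} q" unfolding q_def
        using b by (intro continuous_intros continuous_on_subset[OF cw]) auto
    next
      fix y :: real assume y: "b < y" "y < r"
      have yp: "y > 0" using y b by simp
      have "(q has_real_derivative (- (y powr (real n - 1) * f y * max (u y) 0 powr p)) + B * b powr (real n - 1 + l) * 1) (at y)"
        unfolding q_def w_def using dw yp
        by (intro DERIV_add DERIV_cmult DERIV_ident) auto
      moreover have "B * b powr (real n - 1 + l) \<le> y powr (real n - 1) * f y * max (u y) 0 powr p"
      proof -
        have "B * b powr (real n - 1 + l) \<le> B * y powr (real n - 1 + l)"
          using B b y nl by (intro mult_left_mono powr_mono2) auto
        also have "\<dots> = y powr (real n - 1) * (c1 * y powr l) * c powr p"
          unfolding B_def by (simp add: powr_add)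
        also have "\<dots> \<le> y powr (real n - 1) * f y * max (u y) 0 powr p"
        proof (intro mult_mono mult_left_mono)
          show "c1 * y powr l \<le> f y" using fl y b by auto
          show "c powr p \<le> max (u y) 0 powr p" using all[of y] yp c p by (intro powr_mono2) auto
        qed (use fpos yp c1 in \<open>simp_all add: less_imp_le\<close>)
        finally show ?thesis .
      qed
      ultimately show "\<exists>d. (q has_real_derivative d) (at y) \<and> d \<le> 0"
        by (intro exI conjI) auto
    qed
    then have "w r \<le> w b - B * b powr (real n - 1 + l) * (r - b)"
      unfolding q_def by (simp add: algebra_simps)
    moreover have "r - b = b" unfolding b_def by simp
    moreover have "w b \<le> 0" unfolding w_def using u'np b by (simp add: mult_nonneg_nonpos)
    moreover have "b powr (real n - 1 + l) * b = b powr (real n + l)"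
      using b powr_add[of b "real n - 1 + l" 1] by simp
    ultimately show ?thesis unfolding b_def by (simp add: algebra_simps)
  qed
  define E where "E = B / (2 powr (real n + l) * (2 + l))"
  have E: "E > 0" unfolding E_def using B l by simp
  have stepB: "u' r \<le> - E * (2 + l) * r powr (1 + l)" if r: "r \<ge> 2 * R0" for r
  proof -
    have rp: "r > 0" using r R0 by simp
    have "r powr (real n - 1) * u' r \<le> - B * (r/2) powr (real n + l)"
      using stepA[OF r] unfolding w_def .
    also have "(r/2) powr (real n + l) = r powr (real n - 1) * (r powr (1 + l) / 2 powr (real n + l))"
      using rp by (simp add: powr_divide powr_add[symmetric])
    also have "- B * (r powr (real n - 1) * (r powr (1 + l) / 2 powr (real n + l))) =
               r powr (real n - 1) * (- E * (2 + l) * r powr (1 + l))"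
    proof -
      have "2 + l \<noteq> 0" using l by simp
      then have "E * (2 + l) = B / 2 powr (real n + l)" unfolding E_def by simp
      then show ?thesis by (rule aux2)
    qed
    finally have "r powr (real n - 1) * u' r \<le> r powr (real n - 1) * (- E * (2 + l) * r powr (1 + l))" .
    moreover have "r powr (real n - 1) > 0" using rp by simp
    ultimately show ?thesis by (rule mult_left_le_imp_le)
  qed
  define M where "M = \<alpha> + E * (2 * R0) powr (2 + l)"
  have M: "M > 0" unfolding M_def using a E by (simp add: add_pos_nonneg)
  have stepC: "u r + E * r powr (2 + l) \<le> M" if r: "r \<ge> 2 * R0" for r
  proof -
    define g where "g s = u s + E * s powr (2 + l)" for s
    have "g (2 * R0) \<ge> g r"
    proof (rule DERIV_nonpos_imp_decreasing_open[of "2 * R0" r g])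
      show "2 * R0 \<le> r" using r by simp
      have hc: "continuous_on {2*R0..r} (\<lambda>s. s powr (2 + l))"
        using R0 by (intro continuous_on_powr) (auto intro: continuous_intros)
      show "continuous_on {2*R0..r} g" unfolding g_def
        using R0 by (intro continuous_on_add continuous_on_mult_left hc continuous_on_subset[OF cu]) auto
    next
      fix y :: real assume y: "2 * R0 < y" "y < r"
      have yp: "y > 0" using y R0 by simp
      have d1: "((\<lambda>s. s powr (2 + l)) has_real_derivative (2 + l) * y powr (2 + l - 1)) (at y)"
        by (rule has_real_derivative_powr) (use yp in auto)
      have "(g has_real_derivative u' y + E * ((2 + l) * y powr (2 + l - 1))) (at y)"
        unfolding g_def using du yp by (intro DERIV_add DERIV_cmult d1) auto
      moreover have "2 + l - 1 = 1 + l" by simp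
      moreover have "u' y \<le> - E * (2 + l) * y powr (1 + l)" using stepB y by auto
      ultimately have "(g has_real_derivative u' y + E * ((2 + l) * y powr (1 + l))) (at y)"
        "u' y + E * ((2 + l) * y powr (1 + l)) \<le> 0" by (simp_all add: mult.assoc)
      then show "\<exists>d. (g has_real_derivative d) (at y) \<and> d \<le> 0" by blast
    qed
    moreover have "u (2 * R0) \<le> \<alpha>" using ule R0 by simp
    ultimately show ?thesis unfolding g_def M_def by simp
  qed
  define r where "r = max (2 * R0) ((M / E) powr (1 / (2 + l)))"
  have r: "r \<ge> 2 * R0" unfolding r_def by simp
  have "r powr (2 + l) \<ge> ((M / E) powr (1 / (2 + l))) powr (2 + l)"
    unfolding r_def using l by (intro powr_mono2) auto
  also have "((M / E) powr (1 / (2 + l))) powr (2 + l) = M / E"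
    using l M E by (simp add: powr_powr)
  finally have "E * r powr (2 + l) \<ge> M" using E by (simp add: field_simps)
  with stepC[OF r] have "u r \<le> 0" by simp
  moreover have "u r > c" using all[of r] r R0 by simp
  ultimately show False using c by simp
qed

lemma fbound:
  fixes f :: "real \<Rightarrow> real"
  assumes fc: "continuous_on {0<..} f" and fpos: "\<forall>r>0. f r > 0" and sig: "\<sigma> > -2"
    and d: "0 < \<delta>" and fC: "\<forall>r. 0 < r \<and> r < \<delta> \<longrightarrow> f r \<le> C * r powr \<sigma>" and R: "R > 0"
  shows "\<exists>D \<tau>. D \<ge> 0 \<and> -2 < \<tau> \<and> \<tau> \<le> 0 \<and> (\<forall>s. 0 < s \<and> s \<le> R \<longrightarrow> f s \<le> D * s powr \<tau>)"
proof -
  define \<tau> where "\<tau> = min \<sigma> 0"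
  have tau: "-2 < \<tau>" "\<tau> \<le> 0" "\<sigma> - \<tau> \<ge> 0" unfolding \<tau>_def using sig by auto
  define R1 where "R1 = max R \<delta>"
  have "\<exists>x\<in>{\<delta>/2..R1}. \<forall>y\<in>{\<delta>/2..R1}. f y \<le> f x"
  proof (rule continuous_attains_sup)
    show "continuous_on {\<delta>/2..R1} f" using d by (intro continuous_on_subset[OF fc]) auto
  qed (use d in \<open>auto simp: R1_def\<close>)
  then obtain M where M: "\<forall>y\<in>{\<delta>/2..R1}. f y \<le> M" by blast
  define D where "D = \<bar>C\<bar> * \<delta> powr (\<sigma> - \<tau>) + \<bar>M\<bar> / R powr \<tau>"
  have D1: "\<bar>C\<bar> * \<delta> powr (\<sigma> - \<tau>) \<ge> 0" "\<bar>M\<bar> / R powr \<tau> \<ge> 0" by auto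
  have "\<forall>s. 0 < s \<and> s \<le> R \<longrightarrow> f s \<le> D * s powr \<tau>"
  proof (intro allI impI)
    fix s :: real assume s: "0 < s \<and> s \<le> R"
    have sp: "s powr \<tau> > 0" using s by simp
    show "f s \<le> D * s powr \<tau>"
    proof (cases "s < \<delta>")
      case True
      have "f s \<le> C * s powr \<sigma>" using fC s True by auto
      also have "\<dots> \<le> \<bar>C\<bar> * s powr \<sigma>" by (intro mult_right_mono) auto
      also have "s powr \<sigma> = s powr \<tau> * s powr (\<sigma> - \<tau>)" by (simp add: powr_add[symmetric])
      also have "\<bar>C\<bar> * (s powr \<tau> * s powr (\<sigma> - \<tau>)) \<le> \<bar>C\<bar> * (s powr \<tau> * \<delta> powr (\<sigma> - \<tau>))"
        using s True tau by (intro mult_left_mono powr_mono2) auto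
      also have "\<dots> = (\<bar>C\<bar> * \<delta> powr (\<sigma> - \<tau>)) * s powr \<tau>" by simp
      also have "\<dots> \<le> D * s powr \<tau>" unfolding D_def using D1 sp by (intro mult_right_mono) auto
      finally show ?thesis .
    next
      case False
      have "f s \<le> M" using M s False d by (auto simp: R1_def)
      also have "\<dots> \<le> \<bar>M\<bar> / R powr \<tau> * s powr \<tau>"
      proof -
        have "R powr \<tau> \<le> s powr \<tau>" using s tau by (intro powr_mono2') auto
        then have "1 \<le> s powr \<tau> / R powr \<tau>" using R by simp
        then have "\<bar>M\<bar> * 1 \<le> \<bar>M\<bar> * (s powr \<tau> / R powr \<tau>)" by (intro mult_left_mono) auto
        then show ?thesis by simp
      qed
      also have "\<dots> \<le> D * s powr \<tau>" unfolding D_def using D1 sp by (intro mult_right_mono) auto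
      finally show ?thesis .
    qed
  qed
  then show ?thesis using tau D1 unfolding D_def by (intro exI[of _ D] exI[of _ \<tau>]) (auto simp: D_def)
qed

theorem lemma3p5:
  fixes n :: nat and l p \<sigma> k :: real and f :: "real \<Rightarrow> real"
    and u :: "real \<Rightarrow> real \<Rightarrow> real"
  assumes n: "n \<ge> 3"
    and l: "-2 < l" "l < 0"
    and p: "1 < p" "p < (real n + 2) / (real n - 2)"
    and f1: "continuous_on {0<..} f" "\<forall>r>0. f r > 0"
    and f2: "\<exists>c1 c2 R. 0 < c1 \<and> 0 < c2 \<and> 0 < R \<and>
               (\<forall>r\<ge>R. c1 * r powr l \<le> f r \<and> f r \<le> c2 * r powr l)"
    and f2': "\<sigma> > -2" "\<exists>C \<delta>. 0 < \<delta> \<and> (\<forall>r. 0 < r \<and> r < \<delta> \<longrightarrow> f r \<le> C * r powr \<sigma>)"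
    and sol: "\<forall>\<alpha>>0. is_radial_sol n f p \<alpha> (u \<alpha>)"
    and k: "k > 1"
  shows "filterlim (\<lambda>\<alpha>. Inf {r. r > 0 \<and> u \<alpha> r = \<alpha> / k}) at_top (at_right 0)"
proof -
  from f2 obtain c1 c2 R0 where c1: "0 < c1" and R0: "0 < R0"
    and fl: "\<forall>r\<ge>R0. c1 * r powr l \<le> f r" by blast
  from f2'(2) obtain C \<delta> where d: "0 < \<delta>" and fC: "\<forall>r. 0 < r \<and> r < \<delta> \<longrightarrow> f r \<le> C * r powr \<sigma>"
    by blast
  have ne: "\<exists>r>0. u \<alpha> r = \<alpha> / k" if a: "\<alpha> > 0" for \<alpha>
  proof -
    from sol a have s: "is_radial_sol n f p \<alpha> (u \<alpha>)" by blast
    obtain u' where U: "u \<alpha> 0 = \<alpha>" "u' 0 = 0" "continuous_on {0..} u'" "continuous_on {0..} (u \<alpha>)"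
     "\<forall>r>0. (u \<alpha> has_real_derivative u' r) (at r)"
     "\<forall>r>0. ((\<lambda>s. s powr (real n - 1) * u' s) has_real_derivative
              (- (r powr (real n - 1) * f r * max (u \<alpha> r) 0 powr p))) (at r)"
     "\<forall>r\<ge>0. u' r \<le> 0" "\<forall>r\<ge>0. u \<alpha> r \<le> \<alpha>"
      by (rule unpack[OF s n f1(2) a])
    have p0: "p > 0" using p by simp
    show ?thesis
      by (rule hits[OF n c1 R0 l fl f1(2) p0 a k U(1) U(3) U(4) U(5) U(6) U(7) U(8)])
  qed
  show ?thesis
    unfolding filterlim_at_top
  proof
    fix Z :: real
    define R where "R = max Z 1"
    have R: "R > 0" "Z \<le> R" unfolding R_def by auto
    obtain D \<tau> where D: "D \<ge> 0" and tau: "-2 < \<tau>" "\<tau> \<le> 0"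
      and fb: "\<forall>s. 0 < s \<and> s \<le> R \<longrightarrow> f s \<le> D * s powr \<tau>"
      using fbound[OF f1(1) f1(2) f2'(1) d fC R(1)] by blast
    define Q where "Q = D * R powr (2+\<tau>) / ((real n+\<tau>)*(2+\<tau>))"
    have Q: "Q \<ge> 0" unfolding Q_def using D tau n by (intro divide_nonneg_pos mult_nonneg_nonneg mult_pos_pos) auto
    define \<epsilon> where "\<epsilon> = ((1 - 1/k) / (Q + 1)) powr (1 / (p - 1))"
    have kk: "1 - 1/k > 0" using k by (simp add: field_simps)
    have eps: "\<epsilon> > 0" unfolding \<epsilon>_def using kk Q k by simp
    have "eventually (\<lambda>\<alpha>. \<alpha> \<in> {0<..<\<epsilon>}) (at_right 0)"
      using eps by (rule eventually_at_right_real)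
    then show "eventually (\<lambda>\<alpha>. Z \<le> Inf {r. r > 0 \<and> u \<alpha> r = \<alpha> / k}) (at_right 0)"
    proof (rule eventually_mono)
      fix \<alpha> :: real assume "\<alpha> \<in> {0<..<\<epsilon>}"
      then have a: "0 < \<alpha>" "\<alpha> < \<epsilon>" by auto
      from sol a have s: "is_radial_sol n f p \<alpha> (u \<alpha>)" by blast
      obtain u' where U: "u \<alpha> 0 = \<alpha>" "u' 0 = 0" "continuous_on {0..} u'" "continuous_on {0..} (u \<alpha>)"
       "\<forall>r>0. (u \<alpha> has_real_derivative u' r) (at r)"
       "\<forall>r>0. ((\<lambda>s. s powr (real n - 1) * u' s) has_real_derivative
                (- (r powr (real n - 1) * f r * max (u \<alpha> r) 0 powr p))) (at r)"
       "\<forall>r\<ge>0. u' r \<le> 0" "\<forall>r\<ge>0. u \<alpha> r \<le> \<alpha>"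
        by (rule unpack[OF s n f1(2) a(1)])
      have low: "\<forall>r. 0 \<le> r \<and> r \<le> R \<longrightarrow> u \<alpha> r \<ge> \<alpha> - D * \<alpha> powr p * R powr (2+\<tau>) / ((real n+\<tau>)*(2+\<tau>))"
        using lower[OF n R(1) D tau fb f1(2) _ a(1) U(1) U(2) U(3) U(4) U(5) U(6) U(8)] p by simp
      have small: "\<alpha> powr (p - 1) * Q < 1 - 1/k"
      proof -
        have "\<alpha> powr (p - 1) \<le> \<epsilon> powr (p - 1)" using a p by (intro powr_mono2) auto
        also have "\<epsilon> powr (p - 1) = (1 - 1/k) / (Q + 1)"
          unfolding \<epsilon>_def using p kk Q by (simp add: powr_powr)
        finally have "\<alpha> powr (p - 1) * Q \<le> (1 - 1/k) / (Q + 1) * Q" using Q by (intro mult_right_mono)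
        also have "\<dots> = (1 - 1/k) * (Q / (Q + 1))" by simp
        also have "\<dots> < (1 - 1/k) * 1" using kk Q by (intro mult_strict_left_mono) auto
        finally show ?thesis by simp
      qed
      have big: "r > R" if r: "r > 0" "u \<alpha> r = \<alpha> / k" for r
      proof (rule ccontr)
        assume "\<not> r > R"
        then have "0 \<le> r \<and> r \<le> R" using r by simp
        then have "u \<alpha> r \<ge> \<alpha> - D * \<alpha> powr p * R powr (2+\<tau>) / ((real n+\<tau>)*(2+\<tau>))"
          by (rule low[rule_format])
        moreover have "D * \<alpha> powr p * R powr (2+\<tau>) / ((real n+\<tau>)*(2+\<tau>)) = \<alpha> powr p * Q"
          unfolding Q_def by simp
        ultimately have "u \<alpha> r \<ge> \<alpha> - \<alpha> powr p * Q" by simp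
        moreover have "\<alpha> powr p = \<alpha> * \<alpha> powr (p - 1)"
          using a powr_add[of \<alpha> 1 "p - 1"] by simp
        ultimately have "\<alpha> / k \<ge> \<alpha> - \<alpha> * (\<alpha> powr (p - 1) * Q)" using r by (simp add: mult_ac)
        then have "\<alpha> * (\<alpha> powr (p - 1) * Q) \<ge> \<alpha> * (1 - 1/k)" by (simp add: algebra_simps)
        then have "\<alpha> powr (p - 1) * Q \<ge> 1 - 1/k" using a by (simp add: mult_le_cancel_left_pos)
        with small show False by simp
      qed
      have "R \<le> Inf {r. r > 0 \<and> u \<alpha> r = \<alpha> / k}"
        using ne[OF a(1)] big by (intro cInf_greatest) (auto intro: less_imp_le)
      then show "Z \<le> Inf {r. r > 0 \<and> u \<alpha> r = \<alpha> / k}" using R by linarith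
    qed
  qed
qed

end
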